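(* Let $r=(r(k))_{k\in2\mathbb{Z}}\in\ell^2(2\mathbb{Z})$ with $r(k)\ge0$. For $n,s\in\mathbb{N}$ and $m\in n+2\mathbb{Z}$ define $$\sigma_1(n,s;m)=\sum_{j_1,\dots,j_s\neq n}\frac{r(m+j_1)}{|n-j_1|}\cdot\frac{r(j_1+j_2)}{|n-j_2|}\cdots\frac{r(j_{s-1}+j_s)}{|n-j_s|},$$ where $j_1,\dots,j_s$ range over $n+2\mathbb{Z}\setminus\{n\}$. Let $\tilde\rho_n=\mathcal{E}_n(r)+2\|r\|/\sqrt n$. Then for $n\ge4$: $$\sigma_1(n,1;m)\le\tilde\rho_n\ \text{ if } |m-n|\le n/2,\qquad \sigma_1(n,1;m)\le\|r\|\ \text{ for all } m\in n+2\mathbb{Z},$$ and, for all $p\in\mathbb{N}$ (and, for the second inequality, also $p=0$) and all $m\in n+2\mathbb{Z}$, $$\sigma_1(n,2p;m)\le(2\|r\|\tilde\rho_n)^p,\qquad \sigma_1(n,2p+1;m)\le\|r\|\,(2\|r\|\tilde\rho_n)^p.$$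
   Context: $\|r\|$ denotes the $\ell^2$ norm of $r$, and $\mathcal{E}_n(r)=\left(\sum_{|k|\ge n}|r(k)|^2\right)^{1/2}$ is the $\ell^2$-norm of the tail of $r$. *)

theory Defs
  imports "HOL-Analysis.Analysis"
begin

text \<open>Sequences on 2Z are modelled as functions int => real; only values at even
  arguments matter.\<close>

definition l2norm :: "(int \<Rightarrow> real) \<Rightarrow> real" where
  "l2norm r = sqrt (\<Sum>\<^sub>\<infinity> k \<in> {k. even k}. (r k)\<^sup>2)"

definition tailnorm :: "nat \<Rightarrow> (int \<Rightarrow> real) \<Rightarrow> real" where
  "tailnorm n r = sqrt (\<Sum>\<^sub>\<infinity> k \<in> {k. even k \<and> \<bar>k\<bar> \<ge> int n}. (r k)\<^sup>2)"

definition Jset :: "nat \<Rightarrow> int set" where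
  "Jset n = {j. even (j - int n) \<and> j \<noteq> int n}"

definition tuples :: "nat \<Rightarrow> nat \<Rightarrow> (nat \<Rightarrow> int) set" where
  "tuples n s = {j. (\<forall>i\<in>{1..s}. j i \<in> Jset n) \<and> (\<forall>i. i \<notin> {1..s} \<longrightarrow> j i = 0)}"

text \<open>sigma_1(n,s;m), a sum of nonnegative terms, taken in ennreal (may be infinite).\<close>
definition sigma1 :: "(int \<Rightarrow> real) \<Rightarrow> nat \<Rightarrow> nat \<Rightarrow> int \<Rightarrow> ennreal" where
  "sigma1 r n s m = (\<Sum>\<^sub>\<infinity> j \<in> tuples n s.
      ennreal (\<Prod>i=1..s. r ((if i = 1 then m else j (i - 1)) + j i) / real_of_int \<bar>int n - j i\<bar>))"

definition rho_tilde :: "(int \<Rightarrow> real) \<Rightarrow> nat \<Rightarrow> real" where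
  "rho_tilde r n = tailnorm n r + 2 * l2norm r / sqrt (real n)"

end

theory Submission
  imports Defs
begin



lemma tail_interval:
  fixes a :: int assumes "a \<ge> 1"
  shows "(\<Sum>k\<in>{a..<a+int d}. 1 / (real_of_int k)\<^sup>2) \<le> 2 / a - 2 / (a + d)"
proof (induction d)
  case 0 then show ?case by simp
next
  case (Suc d)
  have set: "{a..<a+int (Suc d)} = insert (a + int d) {a..<a+int d}" by auto
  define x where "x = real_of_int a + real d"
  have x1: "x \<ge> 1" using assms unfolding x_def by simp
  have e: "2 / x - 2 / (x + 1) = 2 / (x * (x+1))" using x1 by (simp add: field_simps)
  have "1 / x\<^sup>2 = 2 / (2 * x * x)" by (simp add: power2_eq_square)
  also have "\<dots> \<le> 2 / (x * (x+1))"
  proof (rule divide_left_mono)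
    show "x * (x+1) \<le> 2 * x * x" using x1 by (simp add: algebra_simps)
    show "0 < 2 * x * x * (x * (x+1))" using x1 by (intro mult_pos_pos) auto
  qed simp
  finally have "1 / x\<^sup>2 \<le> 2 / x - 2 / (x + 1)" using e by simp
  then show ?case using Suc set unfolding x_def by (simp add: algebra_simps)
qed

lemma tail_pos:
  fixes a :: int assumes "a \<ge> 1" "finite K" "K \<subseteq> {a..}"
  shows "(\<Sum>k\<in>K. 1 / (real_of_int k)\<^sup>2) \<le> 2 / a"
proof -
  define d where "d = nat (Max (insert a K) - a + 1)"
  have d: "K \<subseteq> {a..<a + int d}"
  proof
    fix k assume k: "k \<in> K"
    then have "k \<le> Max (insert a K)" using assms(2) by simp
    moreover have "a \<le> Max (insert a K)" using assms(2) by simp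
    ultimately show "k \<in> {a..<a + int d}" using k assms(3) unfolding d_def by auto
  qed
  have "(\<Sum>k\<in>K. 1 / (real_of_int k)\<^sup>2) \<le> (\<Sum>k\<in>{a..<a+int d}. 1 / (real_of_int k)\<^sup>2)"
    by (rule sum_mono2) (use d in auto)
  also have "\<dots> \<le> 2 / a - 2 / (a + d)" by (rule tail_interval[OF assms(1)])
  also have "\<dots> \<le> 2 / a" using assms(1) by simp
  finally show ?thesis .
qed

lemma tail_abs:
  fixes a :: int assumes "a \<ge> 1" "finite K" "\<forall>k\<in>K. \<bar>k\<bar> \<ge> a"
  shows "(\<Sum>k\<in>K. 1 / (real_of_int k)\<^sup>2) \<le> 4 / a"
proof -
  let ?f = "\<lambda>k::int. 1 / (real_of_int k)\<^sup>2"
  have KU: "K = {k\<in>K. k > 0} \<union> {k\<in>K. k < 0}" using assms(1,3) by force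
  have "sum ?f K = sum ?f {k\<in>K. k > 0} + sum ?f {k\<in>K. k < 0}"
    by (subst KU, rule sum.union_disjoint) (use assms(2) in auto)
  also have "sum ?f {k\<in>K. k > 0} \<le> 2 / a"
    by (rule tail_pos) (use assms in auto)
  also have "sum ?f {k\<in>K. k < 0} = sum ?f (uminus ` {k\<in>K. k < 0})"
    by (subst sum.reindex) (auto simp: inj_on_def)
  also have "\<dots> \<le> 2 / a"
    by (rule tail_pos) (use assms in auto)
  finally show ?thesis by simp
qed
lemma weight:
  assumes "finite F" "F \<subseteq> Jset n" "a \<ge> 1" "\<forall>j\<in>F. \<bar>j - int n\<bar> \<ge> 2 * a"
  shows "(\<Sum>j\<in>F. (1 / real_of_int \<bar>int n - j\<bar>)\<^sup>2) \<le> 1 / a"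
proof -
  define h where "h j = (j - int n) div 2" for j
  have hj: "j - int n = 2 * h j" if "j \<in> F" for j
    using that assms(2) unfolding h_def Jset_def by auto
  have inj: "inj_on h F"
  proof
    fix x y assume "x \<in> F" "y \<in> F" "h x = h y"
    then show "x = y" using hj[of x] hj[of y] by linarith
  qed
  have "(\<Sum>j\<in>F. (1 / real_of_int \<bar>int n - j\<bar>)\<^sup>2) = (\<Sum>j\<in>F. (1/4) * (1 / (real_of_int (h j))\<^sup>2))"
  proof (rule sum.cong)
    fix j assume "j \<in> F"
    then have "\<bar>int n - j\<bar> = 2 * \<bar>h j\<bar>" using hj[of j] by linarith
    then have "real_of_int \<bar>int n - j\<bar> = 2 * \<bar>real_of_int (h j)\<bar>" by (metis of_int_abs of_int_mult of_int_numeral)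
    then show "(1 / real_of_int \<bar>int n - j\<bar>)\<^sup>2 = (1/4) * (1 / (real_of_int (h j))\<^sup>2)"
      by (simp add: power2_eq_square field_simps)
  qed simp
  also have "\<dots> = (1/4) * (\<Sum>k\<in>h ` F. 1 / (real_of_int k)\<^sup>2)"
    by (simp add: sum_distrib_left sum.reindex[OF inj])
  also have "\<dots> \<le> (1/4) * (4 / a)"
  proof (rule mult_left_mono)
    show "(\<Sum>k\<in>h ` F. 1 / (real_of_int k)\<^sup>2) \<le> 4 / a"
    proof (rule tail_abs)
      show "\<forall>k\<in>h ` F. a \<le> \<bar>k\<bar>"
      proof
        fix k assume "k \<in> h ` F"
        then obtain j where j: "j \<in> F" "k = h j" by auto
        then show "a \<le> \<bar>k\<bar>" using hj[of j] assms(4) by force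
      qed
    qed (use assms in auto)
  qed simp
  finally show ?thesis by simp
qed

lemma cs_fin:
  assumes "finite F" "\<forall>j\<in>F. r (m + j) \<ge> (0::real)"
  shows "(\<Sum>j\<in>F. r (m + j) / real_of_int \<bar>int n - j\<bar>)
     \<le> sqrt (\<Sum>j\<in>F. (r (m + j))\<^sup>2) * sqrt (\<Sum>j\<in>F. (1 / real_of_int \<bar>int n - j\<bar>)\<^sup>2)"
proof -
  have "(\<Sum>j\<in>F. r (m + j) / real_of_int \<bar>int n - j\<bar>)
      = (\<Sum>j\<in>F. \<bar>r (m + j)\<bar> * \<bar>1 / real_of_int \<bar>int n - j\<bar>\<bar>)"
    using assms(2) by (intro sum.cong) auto
  also have "\<dots> \<le> L2_set (\<lambda>j. r (m + j)) F * L2_set (\<lambda>j. 1 / real_of_int \<bar>int n - j\<bar>) F"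
    by (rule L2_set_mult_ineq)
  finally show ?thesis unfolding L2_set_def .
qed

lemma r2_fin:
  fixes r :: "int \<Rightarrow> real"
  assumes "finite F" "(\<lambda>j. m + j) ` F \<subseteq> S" "(\<lambda>k. (r k)\<^sup>2) summable_on S"
  shows "(\<Sum>j\<in>F. (r (m + j))\<^sup>2) \<le> (\<Sum>\<^sub>\<infinity>k\<in>S. (r k)\<^sup>2)"
proof -
  have "(\<Sum>j\<in>F. (r (m + j))\<^sup>2) = (\<Sum>k\<in>(\<lambda>j. m + j) ` F. (r k)\<^sup>2)"
    by (subst sum.reindex) (auto simp: inj_on_def)
  also have "\<dots> = (\<Sum>\<^sub>\<infinity>k\<in>(\<lambda>j. m + j) ` F. (r k)\<^sup>2)" using assms(1) by simp
  also have "\<dots> \<le> (\<Sum>\<^sub>\<infinity>k\<in>S. (r k)\<^sup>2)"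
    by (rule infsum_mono_neutral) (use assms in auto)
  finally show ?thesis .
qed

lemma enn_cmult:
  fixes f :: "'a \<Rightarrow> ennreal"
  shows "infsum (\<lambda>x. c * f x) A = c * infsum f A"
proof -
  have "infsum (\<lambda>x. c * f x) A = (SUP F\<in>{F. finite F \<and> F\<subseteq>A}. sum (\<lambda>x. c * f x) F)"
    by (rule nonneg_infsum_complete) simp
  also have "\<dots> = (SUP F\<in>{F. finite F \<and> F\<subseteq>A}. c * sum f F)"
    by (simp add: sum_distrib_left)
  also have "\<dots> = c * (SUP F\<in>{F. finite F \<and> F\<subseteq>A}. sum f F)"
    by (rule SUP_mult_left_ennreal[symmetric]) 
  also have "\<dots> = c * infsum f A"
    by (subst nonneg_infsum_complete) auto
  finally show ?thesis .
qed

lemma enn_sum_le_infsum: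
  fixes f :: "'a \<Rightarrow> ennreal"
  assumes "finite F" "F \<subseteq> A"
  shows "sum f F \<le> infsum f A"
proof -
  have "infsum f A = (SUP F\<in>{F. finite F \<and> F\<subseteq>A}. sum f F)"
    by (rule nonneg_infsum_complete) simp
  then show ?thesis using assms by (metis (mono_tags, lifting) SUP_upper mem_Collect_eq)
qed

lemma enn_Sigma_le:
  fixes f :: "'a \<times> 'b \<Rightarrow> ennreal"
  shows "infsum f (Sigma A B) \<le> infsum (\<lambda>x. infsum (\<lambda>y. f (x,y)) (B x)) A"
proof (rule infsum_le_finite_sums)
  fix F assume F: "finite F" "F \<subseteq> Sigma A B"
  define X where "X = fst ` F"
  define C where "C x = {y. (x,y) \<in> F}" for x
  have FS: "F = Sigma X C" unfolding X_def C_def by force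
  have finC: "finite (C x)" for x
  proof -
    have "C x \<subseteq> snd ` F" unfolding C_def by force
    then show ?thesis using F(1) finite_subset by blast
  qed
  have "sum f F = (\<Sum>x\<in>X. \<Sum>y\<in>C x. f (x,y))"
    unfolding FS using sum.Sigma[of X C "\<lambda>x y. f (x,y)"] F(1) finC by (simp add: X_def)
  also have "\<dots> \<le> (\<Sum>x\<in>X. infsum (\<lambda>y. f (x,y)) (B x))"
  proof (rule sum_mono)
    fix x assume "x \<in> X"
    show "(\<Sum>y\<in>C x. f (x,y)) \<le> infsum (\<lambda>y. f (x,y)) (B x)"
      by (rule enn_sum_le_infsum) (use finC F(2) in \<open>auto simp: C_def\<close>)
  qed
  also have "\<dots> \<le> infsum (\<lambda>x. infsum (\<lambda>y. f (x,y)) (B x)) A"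
    by (rule enn_sum_le_infsum) (use F in \<open>auto simp: X_def\<close>)
  finally show "sum f F \<le> infsum (\<lambda>x. infsum (\<lambda>y. f (x,y)) (B x)) A" .
qed (rule nonneg_summable_on_complete, simp)

fun Tb :: "(int \<Rightarrow> real) \<Rightarrow> nat \<Rightarrow> nat \<Rightarrow> int \<Rightarrow> ennreal" where
  "Tb r n 0 m = 1"
| "Tb r n (Suc t) m = (\<Sum>\<^sub>\<infinity>j\<in>Jset n. ennreal (r (m + j) / real_of_int \<bar>int n - j\<bar>) * Tb r n t j)"

lemma sigma1_0: "sigma1 r n 0 m = 1"
proof -
  have "tuples n 0 = {\<lambda>_. 0}" unfolding tuples_def by auto
  then show ?thesis unfolding sigma1_def by simp
qed

definition glue :: "nat \<Rightarrow> int \<Rightarrow> (nat \<Rightarrow> int) \<Rightarrow> (nat \<Rightarrow> int)" where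
  "glue t j1 j' = (\<lambda>i. if i = 1 then j1 else if 2 \<le> i \<and> i \<le> Suc t then j' (i - 1) else 0)"

lemma glue_bij:
  "bij_betw (\<lambda>(j1, j'). glue t j1 j') (Sigma (Jset n) (\<lambda>_. tuples n t)) (tuples n (Suc t))"
proof (rule bij_betw_byWitness[where f' = "\<lambda>j. (j 1, \<lambda>i. if 1 \<le> i \<and> i \<le> t then j (Suc i) else 0)"])
  show "\<forall>a\<in>Sigma (Jset n) (\<lambda>_. tuples n t).
     (\<lambda>j. (j 1, \<lambda>i. if 1 \<le> i \<and> i \<le> t then j (Suc i) else 0)) (case a of (j1, j') \<Rightarrow> glue t j1 j') = a"
    by (auto simp: glue_def tuples_def fun_eq_iff)
  show "\<forall>a'\<in>tuples n (Suc t). (case (a' 1, \<lambda>i. if 1 \<le> i \<and> i \<le> t then a' (Suc i) else 0) of (j1, j') \<Rightarrow> glue t j1 j') = a'"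
  proof
    fix a' assume a': "a' \<in> tuples n (Suc t)"
    show "(case (a' 1, \<lambda>i. if 1 \<le> i \<and> i \<le> t then a' (Suc i) else 0) of (j1, j') \<Rightarrow> glue t j1 j') = a'"
    proof
      fix i
      show "(case (a' 1, \<lambda>i. if 1 \<le> i \<and> i \<le> t then a' (Suc i) else 0) of (j1, j') \<Rightarrow> glue t j1 j') i = a' i"
      proof (cases "i = 1 \<or> (2 \<le> i \<and> i \<le> Suc t)")
        case True then show ?thesis by (auto simp: glue_def)
      next
        case False then have "i \<notin> {1..Suc t}" by auto
        then show ?thesis using a' False by (auto simp: glue_def tuples_def)
      qed
    qed
  qed
  show "(\<lambda>(j1, j'). glue t j1 j') ` Sigma (Jset n) (\<lambda>_. tuples n t) \<subseteq> tuples n (Suc t)"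
  proof clarify
    fix j1 j' assume h: "j1 \<in> Jset n" "j' \<in> tuples n t"
    show "glue t j1 j' \<in> tuples n (Suc t)" unfolding tuples_def
    proof safe
      fix i :: nat assume i: "i \<in> {1..Suc t}"
      show "glue t j1 j' i \<in> Jset n"
      proof (cases "i = 1")
        case True then show ?thesis using h by (simp add: glue_def)
      next
        case False then have "i - 1 \<in> {1..t}" "2 \<le> i" "i \<le> Suc t" using i by auto
        then show ?thesis using h False by (auto simp: glue_def tuples_def)
      qed
    next
      fix i :: nat assume "i \<notin> {1..Suc t}"
      then show "glue t j1 j' i = 0" by (auto simp: glue_def)
    qed
  qed
  show "(\<lambda>j. (j 1, \<lambda>i. if 1 \<le> i \<and> i \<le> t then j (Suc i) else 0)) ` tuples n (Suc t) \<subseteq> Sigma (Jset n) (\<lambda>_. tuples n t)"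
    by (auto simp: tuples_def)
qed


definition Pr :: "(int \<Rightarrow> real) \<Rightarrow> nat \<Rightarrow> nat \<Rightarrow> int \<Rightarrow> (nat \<Rightarrow> int) \<Rightarrow> real" where
  "Pr r n s m j = (\<Prod>i=1..s. r ((if i = 1 then m else j (i - 1)) + j i) / real_of_int \<bar>int n - j i\<bar>)"

lemma sigma1_Pr: "sigma1 r n s m = (\<Sum>\<^sub>\<infinity>j\<in>tuples n s. ennreal (Pr r n s m j))"
  by (simp add: sigma1_def Pr_def)

lemma Pr_glue:
  "Pr r n (Suc t) m (glue t j1 j') = r (m + j1) / real_of_int \<bar>int n - j1\<bar> * Pr r n t j1 j'"
proof -
  let ?g = "\<lambda>i. r ((if i = 1 then m else glue t j1 j' (i - 1)) + glue t j1 j' i) / real_of_int \<bar>int n - glue t j1 j' i\<bar>"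
  have "Pr r n (Suc t) m (glue t j1 j') = ?g 1 * prod ?g {Suc 1..Suc t}"
    unfolding Pr_def by (subst prod.atLeast_Suc_atMost) simp_all
  also have "prod ?g {Suc 1..Suc t} = prod (\<lambda>i. ?g (Suc i)) {1..t}"
    by (rule prod.shift_bounds_cl_Suc_ivl)
  also have "\<dots> = Pr r n t j1 j'"
    unfolding Pr_def by (rule prod.cong) (auto simp: glue_def)
  moreover have "?g 1 = r (m + j1) / real_of_int \<bar>int n - j1\<bar>" by (simp add: glue_def)
  ultimately show ?thesis by metis
qed

lemma enn_infsum_mono:
  fixes f g :: "'a \<Rightarrow> ennreal"
  assumes "\<And>x. x \<in> A \<Longrightarrow> f x \<le> g x"
  shows "infsum f A \<le> infsum g A"
  by (rule infsum_mono) (auto intro: nonneg_summable_on_complete assms)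



lemma sigma_le_Tb:
  assumes nonneg: "\<And>k. even k \<Longrightarrow> r k \<ge> 0"
  shows "even (m - int n) \<Longrightarrow> sigma1 r n t m \<le> Tb r n t m"
proof (induction t arbitrary: m)
  case 0 then show ?case by (simp add: sigma1_0)
next
  case (Suc t)
  let ?a = "\<lambda>j1. r (m + j1) / real_of_int \<bar>int n - j1\<bar>"
  have apos: "?a j1 \<ge> 0" if "j1 \<in> Jset n" for j1
  proof -
    have "even (m + j1)" using that Suc.prems unfolding Jset_def by simp
    then show ?thesis using nonneg by simp
  qed
  have "sigma1 r n (Suc t) m = (\<Sum>\<^sub>\<infinity>j\<in>tuples n (Suc t). ennreal (Pr r n (Suc t) m j))"
    by (rule sigma1_Pr)
  also have "\<dots> = (\<Sum>\<^sub>\<infinity>x\<in>Sigma (Jset n) (\<lambda>_. tuples n t). ennreal (Pr r n (Suc t) m ((\<lambda>(j1, j'). glue t j1 j') x)))"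
    by (rule infsum_reindex_bij_betw[OF glue_bij, symmetric])
  also have "\<dots> \<le> (\<Sum>\<^sub>\<infinity>j1\<in>Jset n. \<Sum>\<^sub>\<infinity>j'\<in>tuples n t. ennreal (Pr r n (Suc t) m (glue t j1 j')))"
    using enn_Sigma_le[of "\<lambda>x. ennreal (Pr r n (Suc t) m ((\<lambda>(j1, j'). glue t j1 j') x))"] by simp
  also have "\<dots> = (\<Sum>\<^sub>\<infinity>j1\<in>Jset n. ennreal (?a j1) * sigma1 r n t j1)"
  proof (rule infsum_cong)
    fix j1 assume j1: "j1 \<in> Jset n"
    have "(\<Sum>\<^sub>\<infinity>j'\<in>tuples n t. ennreal (Pr r n (Suc t) m (glue t j1 j')))
        = (\<Sum>\<^sub>\<infinity>j'\<in>tuples n t. ennreal (?a j1) * ennreal (Pr r n t j1 j'))"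
      by (rule infsum_cong) (simp only: Pr_glue ennreal_mult'[OF apos[OF j1]])
    also have "\<dots> = ennreal (?a j1) * sigma1 r n t j1"
      by (simp add: enn_cmult sigma1_Pr)
    finally show "(\<Sum>\<^sub>\<infinity>j'\<in>tuples n t. ennreal (Pr r n (Suc t) m (glue t j1 j'))) = ennreal (?a j1) * sigma1 r n t j1" .
  qed
  also have "\<dots> \<le> (\<Sum>\<^sub>\<infinity>j1\<in>Jset n. ennreal (?a j1) * Tb r n t j1)"
  proof (rule enn_infsum_mono)
    fix j1 assume "j1 \<in> Jset n"
    then have "even (j1 - int n)" by (simp add: Jset_def)
    then show "ennreal (?a j1) * sigma1 r n t j1 \<le> ennreal (?a j1) * Tb r n t j1"
      using Suc.IH by (intro mult_left_mono) auto
  qed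
  also have "\<dots> = Tb r n (Suc t) m" by simp
  finally show ?case .
qed




lemma sq_l2: assumes "(\<lambda>k. (r k)\<^sup>2) summable_on {k. even k}"
  shows "(l2norm r)\<^sup>2 = (\<Sum>\<^sub>\<infinity>k\<in>{k. even k}. (r k)\<^sup>2)"
  unfolding l2norm_def by (rule real_sqrt_pow2) (rule infsum_nonneg, simp)

lemma sq_tail: assumes "(\<lambda>k. (r k)\<^sup>2) summable_on {k. even k}"
  shows "(tailnorm n r)\<^sup>2 = (\<Sum>\<^sub>\<infinity>k\<in>{k. even k \<and> \<bar>k\<bar> \<ge> int n}. (r k)\<^sup>2)"
  unfolding tailnorm_def by (rule real_sqrt_pow2) (rule infsum_nonneg, simp)

lemma even_sum_J: "even (m - int n) \<Longrightarrow> j \<in> Jset n \<Longrightarrow> even (m + j)"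
  unfolding Jset_def by simp

lemma L_gen:
  fixes r :: "int \<Rightarrow> real"
  assumes nonneg: "\<And>k. even k \<Longrightarrow> r k \<ge> 0"
    and F: "finite F" "F \<subseteq> Jset n" and m: "even (m - int n)"
    and S: "(\<lambda>j. m + j) ` F \<subseteq> S" "(\<lambda>k. (r k)\<^sup>2) summable_on S"
    and W: "(\<Sum>j\<in>F. (1 / real_of_int \<bar>int n - j\<bar>)\<^sup>2) \<le> w"
  shows "(\<Sum>j\<in>F. r (m + j) / real_of_int \<bar>int n - j\<bar>) \<le> sqrt (\<Sum>\<^sub>\<infinity>k\<in>S. (r k)\<^sup>2) * sqrt w"
proof -
  have "(\<Sum>j\<in>F. r (m + j) / real_of_int \<bar>int n - j\<bar>)
     \<le> sqrt (\<Sum>j\<in>F. (r (m + j))\<^sup>2) * sqrt (\<Sum>j\<in>F. (1 / real_of_int \<bar>int n - j\<bar>)\<^sup>2)"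
    by (rule cs_fin) (use F m nonneg even_sum_J in blast)+
  also have "\<dots> \<le> sqrt (\<Sum>\<^sub>\<infinity>k\<in>S. (r k)\<^sup>2) * sqrt w"
    by (intro mult_mono real_sqrt_le_mono r2_fin F S W) (auto intro!: infsum_nonneg sum_nonneg)
  finally show ?thesis .
qed

lemma L1:
  fixes r :: "int \<Rightarrow> real"
  assumes l2: "(\<lambda>k. (r k)\<^sup>2) summable_on {k. even k}"
    and nonneg: "\<And>k. even k \<Longrightarrow> r k \<ge> 0"
    and F: "finite F" "F \<subseteq> Jset n" and m: "even (m - int n)"
  shows "(\<Sum>j\<in>F. r (m + j) / real_of_int \<bar>int n - j\<bar>) \<le> l2norm r"
proof -
  have W: "(\<Sum>j\<in>F. (1 / real_of_int \<bar>int n - j\<bar>)\<^sup>2) \<le> 1"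
  proof -
    have "(\<Sum>j\<in>F. (1 / real_of_int \<bar>int n - j\<bar>)\<^sup>2) \<le> 1 / real_of_int 1"
    proof (rule weight[OF F])
      show "\<forall>j\<in>F. 2 * 1 \<le> \<bar>j - int n\<bar>"
      proof
        fix j assume "j \<in> F"
        then have "even (j - int n)" "j \<noteq> int n" using F(2) by (auto simp: Jset_def)
        then show "2 * 1 \<le> \<bar>j - int n\<bar>" by presburger
      qed
    qed simp
    then show ?thesis by simp
  qed
  have "(\<Sum>j\<in>F. r (m + j) / real_of_int \<bar>int n - j\<bar>) \<le> sqrt (\<Sum>\<^sub>\<infinity>k\<in>{k. even k}. (r k)\<^sup>2) * sqrt 1"
    by (rule L_gen[OF nonneg F m _ l2 W]) (use F(2) in \<open>auto intro!: even_sum_J[OF m]\<close>)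
  then show ?thesis by (simp add: l2norm_def)
qed

lemma L2:
  fixes r :: "int \<Rightarrow> real"
  assumes l2: "(\<lambda>k. (r k)\<^sup>2) summable_on {k. even k}"
    and nonneg: "\<And>k. even k \<Longrightarrow> r k \<ge> 0"
    and F: "finite F" "F \<subseteq> Jset n" and m: "even (m - int n)"
    and far: "\<forall>j\<in>F. real_of_int \<bar>j - int n\<bar> > real n / 2" and n4: "n \<ge> 4"
  shows "(\<Sum>j\<in>F. r (m + j) / real_of_int \<bar>int n - j\<bar>) \<le> l2norm r * (2 / sqrt n)"
proof -
  define a where "a = int (n div 4) + 1"
  have W: "(\<Sum>j\<in>F. (1 / real_of_int \<bar>int n - j\<bar>)\<^sup>2) \<le> 4 / n"
  proof -
    have "(\<Sum>j\<in>F. (1 / real_of_int \<bar>int n - j\<bar>)\<^sup>2) \<le> 1 / real_of_int a"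
    proof (rule weight[OF F])
      show "\<forall>j\<in>F. 2 * a \<le> \<bar>j - int n\<bar>"
      proof
        fix j assume j: "j \<in> F"
        then have "even (j - int n)" using F(2) by (auto simp: Jset_def)
        moreover have "2 * \<bar>j - int n\<bar> > int n"
        proof -
          have h: "real_of_int \<bar>j - int n\<bar> > real n / 2" using far j by blast
          have "real_of_int (2 * \<bar>j - int n\<bar>) = 2 * real_of_int \<bar>j - int n\<bar>" by simp
          also have "\<dots> > real_of_int (int n)" using h by simp
          finally show ?thesis by (simp only: of_int_less_iff)
        qed
        ultimately show "2 * a \<le> \<bar>j - int n\<bar>" unfolding a_def by presburger
      qed
    qed (simp add: a_def)
    also have "1 / real_of_int a \<le> 4 / n"
    proof -
      have "n < 4 * (n div 4 + 1)" by presburger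
      then have "int n < int (4 * (n div 4 + 1))" by (simp only: of_nat_less_iff)
      then have "int n < 4 * a" unfolding a_def by simp
      then have "real n \<le> 4 * real_of_int a" by linarith
      moreover have "real_of_int a > 0" unfolding a_def by simp
      ultimately show ?thesis using n4 by (simp add: field_simps)
    qed
    finally show ?thesis .
  qed
  have "(\<Sum>j\<in>F. r (m + j) / real_of_int \<bar>int n - j\<bar>) \<le> sqrt (\<Sum>\<^sub>\<infinity>k\<in>{k. even k}. (r k)\<^sup>2) * sqrt (4 / n)"
    by (rule L_gen[OF nonneg F m _ l2 W]) (use F(2) in \<open>auto intro!: even_sum_J[OF m]\<close>)
  moreover have "sqrt (4 / real n) = 2 / sqrt n" by (simp add: real_sqrt_divide)
  ultimately show ?thesis by (simp add: l2norm_def)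
qed

lemma L3:
  fixes r :: "int \<Rightarrow> real"
  assumes l2: "(\<lambda>k. (r k)\<^sup>2) summable_on {k. even k}"
    and nonneg: "\<And>k. even k \<Longrightarrow> r k \<ge> 0"
    and F: "finite F" "F \<subseteq> Jset n" and m: "even (m - int n)"
    and tl: "\<forall>j\<in>F. \<bar>m + j\<bar> \<ge> int n"
  shows "(\<Sum>j\<in>F. r (m + j) / real_of_int \<bar>int n - j\<bar>) \<le> tailnorm n r"
proof -
  have W: "(\<Sum>j\<in>F. (1 / real_of_int \<bar>int n - j\<bar>)\<^sup>2) \<le> 1"
  proof -
    have "(\<Sum>j\<in>F. (1 / real_of_int \<bar>int n - j\<bar>)\<^sup>2) \<le> 1 / real_of_int 1"
    proof (rule weight[OF F])
      show "\<forall>j\<in>F. 2 * 1 \<le> \<bar>j - int n\<bar>"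
      proof
        fix j assume "j \<in> F"
        then have "even (j - int n)" "j \<noteq> int n" using F(2) by (auto simp: Jset_def)
        then show "2 * 1 \<le> \<bar>j - int n\<bar>" by presburger
      qed
    qed simp
    then show ?thesis by simp
  qed
  have sm: "(\<lambda>k. (r k)\<^sup>2) summable_on {k. even k \<and> \<bar>k\<bar> \<ge> int n}"
    by (rule summable_on_subset_banach[OF l2]) auto
  have "(\<Sum>j\<in>F. r (m + j) / real_of_int \<bar>int n - j\<bar>)
       \<le> sqrt (\<Sum>\<^sub>\<infinity>k\<in>{k. even k \<and> \<bar>k\<bar> \<ge> int n}. (r k)\<^sup>2) * sqrt 1"
    by (rule L_gen[OF nonneg F m _ sm W]) (use F(2) tl in \<open>auto intro!: even_sum_J[OF m]\<close>)
  then show ?thesis by (simp add: tailnorm_def)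
qed




lemma A_nonneg:
  assumes nonneg: "\<And>k. even k \<Longrightarrow> (r::int\<Rightarrow>real) k \<ge> 0" and m: "even (m - int n)" and j: "j \<in> Jset n"
  shows "r (m + j) / real_of_int \<bar>int n - j\<bar> \<ge> 0"
  using nonneg[OF even_sum_J[OF m j]] by simp

lemma Tb1_bound:
  assumes nonneg: "\<And>k. even k \<Longrightarrow> (r::int\<Rightarrow>real) k \<ge> 0" and m: "even (m - int n)"
    and B: "\<And>F. finite F \<Longrightarrow> F \<subseteq> Jset n \<Longrightarrow> (\<Sum>j\<in>F. r (m + j) / real_of_int \<bar>int n - j\<bar>) \<le> B"
  shows "Tb r n 1 m \<le> ennreal B"
proof -
  have "Tb r n 1 m = (\<Sum>\<^sub>\<infinity>j\<in>Jset n. ennreal (r (m + j) / real_of_int \<bar>int n - j\<bar>))"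
    by (simp only: One_nat_def Tb.simps mult_1_right)
  also have "\<dots> \<le> ennreal B"
  proof (rule infsum_le_finite_sums)
    fix F assume F: "finite F" "F \<subseteq> Jset n"
    have "(\<Sum>j\<in>F. ennreal (r (m + j) / real_of_int \<bar>int n - j\<bar>)) = ennreal (\<Sum>j\<in>F. r (m + j) / real_of_int \<bar>int n - j\<bar>)"
    proof (rule sum_ennreal)
      fix j assume "j \<in> F"
      then have jJ: "j \<in> Jset n" using F by auto
      show "0 \<le> r (m + j) / real_of_int \<bar>int n - j\<bar>" using A_nonneg[OF nonneg m jJ] .
    qed
    also have "\<dots> \<le> ennreal B" by (rule ennreal_leI[OF B[OF F]])
    finally show "(\<Sum>j\<in>F. ennreal (r (m + j) / real_of_int \<bar>int n - j\<bar>)) \<le> ennreal B" .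
  qed (rule nonneg_summable_on_complete, simp)
  finally show ?thesis .
qed

lemma B1:
  assumes l2: "(\<lambda>k. (r k)\<^sup>2) summable_on {k. even k}"
    and nonneg: "\<And>k. even k \<Longrightarrow> (r::int\<Rightarrow>real) k \<ge> 0" and m: "even (m - int n)"
  shows "Tb r n 1 m \<le> ennreal (l2norm r)"
proof (rule Tb1_bound[OF nonneg m])
  fix F assume F: "finite F" "F \<subseteq> Jset n"
  show "(\<Sum>j\<in>F. r (m + j) / real_of_int \<bar>int n - j\<bar>) \<le> l2norm r"
    by (rule L1[OF l2 nonneg F m])
qed

lemma B1':
  assumes l2: "(\<lambda>k. (r k)\<^sup>2) summable_on {k. even k}"
    and nonneg: "\<And>k. even k \<Longrightarrow> (r::int\<Rightarrow>real) k \<ge> 0" and m: "even (m - int n)"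
    and n4: "n \<ge> 4" and close: "real_of_int \<bar>m - int n\<bar> \<le> real n / 2"
  shows "Tb r n 1 m \<le> ennreal (rho_tilde r n)"
proof (rule Tb1_bound[OF nonneg m])
  fix F assume F: "finite F" "F \<subseteq> Jset n"
  let ?f = "\<lambda>j. r (m + j) / real_of_int \<bar>int n - j\<bar>"
  let ?P = "{j. \<bar>m + j\<bar> \<ge> int n}"
  have "sum ?f F = sum ?f (F \<inter> ?P) + sum ?f (F - ?P)" by (rule sum.Int_Diff[OF F(1)])
  also have "sum ?f (F \<inter> ?P) \<le> tailnorm n r"
    by (rule L3[OF l2 nonneg _ _ m]) (use F in auto)
  also have "sum ?f (F - ?P) \<le> l2norm r * (2 / sqrt n)"
  proof (rule L2[OF l2 nonneg _ _ m _ n4])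
    show "\<forall>j\<in>F - ?P. real n / 2 < real_of_int \<bar>j - int n\<bar>"
    proof
      fix j assume "j \<in> F - ?P"
      then have "\<bar>m + j\<bar> < int n" by auto
      then have h1: "real_of_int m + real_of_int j < real n" by linarith
      have h2: "real_of_int m \<ge> real n / 2" using close by linarith
      show "real n / 2 < real_of_int \<bar>j - int n\<bar>" using h1 h2 by linarith
    qed
  qed (use F in auto)
  finally have "sum ?f F \<le> tailnorm n r + l2norm r * (2 / sqrt n)" by simp
  also have "\<dots> = rho_tilde r n" unfolding rho_tilde_def by simp
  finally show "sum ?f F \<le> rho_tilde r n" .
qed

lemma B2:
  assumes l2: "(\<lambda>k. (r k)\<^sup>2) summable_on {k. even k}"
    and nonneg: "\<And>k. even k \<Longrightarrow> (r::int\<Rightarrow>real) k \<ge> 0" and m: "even (m - int n)"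
    and n4: "n \<ge> 4"
  shows "Tb r n 2 m \<le> ennreal (2 * l2norm r * rho_tilde r n)"
proof -
  let ?f = "\<lambda>j. r (m + j) / real_of_int \<bar>int n - j\<bar>"
  let ?N = "{j. real_of_int \<bar>j - int n\<bar> \<le> real n / 2}"
  define R where "R = l2norm r"
  define rho where "rho = rho_tilde r n"
  define b where "b j = (if j \<in> ?N then rho else R)" for j
  have R0: "R \<ge> 0" unfolding R_def l2norm_def by (intro real_sqrt_ge_zero infsum_nonneg) simp
  have E0: "tailnorm n r \<ge> 0" unfolding tailnorm_def by (intro real_sqrt_ge_zero infsum_nonneg) simp
  have "R * (2 / sqrt n) = 2 * R / sqrt n" by (simp add: mult.commute)
  then have Rrho: "R * (2 / sqrt n) \<le> rho" unfolding rho_def rho_tilde_def R_def using E0 by linarith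
  have "R * (2 / sqrt n) \<ge> 0" using R0 by simp
  then have rho0: "rho \<ge> 0" using Rrho by linarith
  have Tb1b: "Tb r n 1 j \<le> ennreal (b j)" if "j \<in> Jset n" for j
  proof -
    have je: "even (j - int n)" using that by (simp add: Jset_def)
    show ?thesis
    proof (cases "j \<in> ?N")
      case True then show ?thesis unfolding b_def rho_def using B1'[OF l2 nonneg je n4] by simp
    next
      case False then show ?thesis unfolding b_def R_def using B1[OF l2 nonneg je] by simp
    qed
  qed
  have "Tb r n 2 m = (\<Sum>\<^sub>\<infinity>j\<in>Jset n. ennreal (?f j) * Tb r n 1 j)" by (simp add: numeral_2_eq_2)
  also have "\<dots> \<le> ennreal (2 * R * rho)"
  proof (rule infsum_le_finite_sums)
    fix F assume F: "finite F" "F \<subseteq> Jset n"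
    have "(\<Sum>j\<in>F. ennreal (?f j) * Tb r n 1 j) \<le> (\<Sum>j\<in>F. ennreal (?f j * b j))"
    proof (rule sum_mono)
      fix j assume j: "j \<in> F"
      then have jJ: "j \<in> Jset n" using F by auto
      have "ennreal (?f j) * Tb r n 1 j \<le> ennreal (?f j) * ennreal (b j)"
        by (rule mult_left_mono[OF Tb1b[OF jJ]]) simp
      also have "\<dots> = ennreal (?f j * b j)" by (rule ennreal_mult'[symmetric]) (rule A_nonneg[OF nonneg m jJ])
      finally show "ennreal (?f j) * Tb r n 1 j \<le> ennreal (?f j * b j)" .
    qed
    also have "\<dots> = ennreal (\<Sum>j\<in>F. ?f j * b j)"
    proof (rule sum_ennreal)
      fix j assume "j \<in> F"
      then have jJ: "j \<in> Jset n" using F by auto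
      have f0: "?f j \<ge> 0" using A_nonneg[OF nonneg m jJ] .
      have "b j \<ge> 0" unfolding b_def using R0 rho0 by simp
      then show "0 \<le> ?f j * b j" by (rule mult_nonneg_nonneg[OF f0])
    qed
    also have "\<dots> \<le> ennreal (2 * R * rho)"
    proof (rule ennreal_leI)
      have e1: "(\<Sum>j\<in>F. ?f j * b j) = (\<Sum>j\<in>F \<inter> ?N. ?f j * b j) + (\<Sum>j\<in>F - ?N. ?f j * b j)"
        by (rule sum.Int_Diff[OF F(1)])
      have e2: "(\<Sum>j\<in>F \<inter> ?N. ?f j * b j) = rho * (\<Sum>j\<in>F \<inter> ?N. ?f j)"
        unfolding sum_distrib_left by (rule sum.cong) (auto simp: b_def)
      have e3: "(\<Sum>j\<in>F - ?N. ?f j * b j) = R * (\<Sum>j\<in>F - ?N. ?f j)"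
        unfolding sum_distrib_left by (rule sum.cong) (auto simp: b_def)
      have i1: "rho * (\<Sum>j\<in>F \<inter> ?N. ?f j) \<le> rho * R"
        by (rule mult_left_mono[OF _ rho0]) (unfold R_def, rule L1[OF l2 nonneg _ _ m], use F in auto)
      have i2: "R * (\<Sum>j\<in>F - ?N. ?f j) \<le> R * (R * (2 / sqrt n))"
        by (rule mult_left_mono[OF _ R0]) (unfold R_def, rule L2[OF l2 nonneg _ _ m _ n4], use F in auto)
      have i3: "R * (R * (2 / sqrt n)) \<le> R * rho" by (rule mult_left_mono[OF Rrho R0])
      have c: "rho * R = R * rho" by (rule mult.commute)
      have d: "2 * R * rho = R * rho + R * rho" by simp
      show "(\<Sum>j\<in>F. ?f j * b j) \<le> 2 * R * rho" using e1 e2 e3 i1 i2 i3 c d by linarith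
    qed
    finally show "(\<Sum>j\<in>F. ennreal (?f j) * Tb r n 1 j) \<le> ennreal (2 * R * rho)" .
  qed (rule nonneg_summable_on_complete, simp)
  finally show ?thesis unfolding R_def rho_def .
qed



lemma Tb_mono_shift:
  assumes C: "\<And>m. even (m - int n) \<Longrightarrow> Tb r n s m \<le> C"
  shows "even (m - int n) \<Longrightarrow> Tb r n (k + s) m \<le> C * Tb r n k m"
proof (induction k arbitrary: m)
  case 0 then show ?case using C by simp
next
  case (Suc k)
  have "Tb r n (Suc k + s) m = (\<Sum>\<^sub>\<infinity>j\<in>Jset n. ennreal (r (m + j) / real_of_int \<bar>int n - j\<bar>) * Tb r n (k + s) j)"
    by simp
  also have "\<dots> \<le> (\<Sum>\<^sub>\<infinity>j\<in>Jset n. C * (ennreal (r (m + j) / real_of_int \<bar>int n - j\<bar>) * Tb r n k j))"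
  proof (rule enn_infsum_mono)
    fix j assume "j \<in> Jset n"
    then have "even (j - int n)" by (simp add: Jset_def)
    then have "Tb r n (k + s) j \<le> C * Tb r n k j" by (rule Suc.IH)
    then have "ennreal (r (m + j) / real_of_int \<bar>int n - j\<bar>) * Tb r n (k + s) j
        \<le> ennreal (r (m + j) / real_of_int \<bar>int n - j\<bar>) * (C * Tb r n k j)"
      by (rule mult_left_mono) simp
    then show "ennreal (r (m + j) / real_of_int \<bar>int n - j\<bar>) * Tb r n (k + s) j
        \<le> C * (ennreal (r (m + j) / real_of_int \<bar>int n - j\<bar>) * Tb r n k j)"
      by (simp add: mult.left_commute)
  qed
  also have "\<dots> = C * Tb r n (Suc k) m" by (simp add: enn_cmult)
  finally show ?case .
qed


lemma l2_nonneg: "l2norm r \<ge> 0"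
  unfolding l2norm_def by (intro real_sqrt_ge_zero infsum_nonneg) simp

lemma rho_nonneg: "rho_tilde r n \<ge> 0"
proof -
  have "tailnorm n r \<ge> 0" unfolding tailnorm_def by (intro real_sqrt_ge_zero infsum_nonneg) simp
  moreover have "2 * l2norm r / sqrt (real n) \<ge> 0" using l2_nonneg[of r] by simp
  ultimately show ?thesis unfolding rho_tilde_def by linarith
qed

theorem lemma3:
  fixes r :: "int \<Rightarrow> real" and n :: nat
  assumes l2: "(\<lambda>k. (r k)\<^sup>2) summable_on {k. even k}"
    and nonneg: "\<And>k. even k \<Longrightarrow> r k \<ge> 0"
    and n4: "n \<ge> 4"
  shows "(\<forall>m. even (m - int n) \<and> real_of_int \<bar>m - int n\<bar> \<le> real n / 2
            \<longrightarrow> sigma1 r n 1 m \<le> ennreal (rho_tilde r n))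
      \<and> (\<forall>m. even (m - int n) \<longrightarrow> sigma1 r n 1 m \<le> ennreal (l2norm r))
      \<and> (\<forall>p m. p \<ge> 1 \<and> even (m - int n)
            \<longrightarrow> sigma1 r n (2 * p) m \<le> ennreal ((2 * l2norm r * rho_tilde r n) ^ p))
      \<and> (\<forall>p m. even (m - int n)
            \<longrightarrow> sigma1 r n (2 * p + 1) m \<le> ennreal (l2norm r * (2 * l2norm r * rho_tilde r n) ^ p))"
proof -
  define R where "R = l2norm r"
  define X where "X = 2 * l2norm r * rho_tilde r n"
  have R0: "R \<ge> 0" unfolding R_def by (rule l2_nonneg)
  have X0: "X \<ge> 0" unfolding X_def using l2_nonneg[of r] rho_nonneg[of r n] by simp
  have sT: "sigma1 r n t m \<le> Tb r n t m" if "even (m - int n)" for t m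
    by (rule sigma_le_Tb[OF nonneg that])
  have ev: "Tb r n (2 * p) m \<le> ennreal (X ^ p)" if "even (m - int n)" for p m
    using that
  proof (induction p arbitrary: m)
    case 0 then show ?case by simp
  next
    case (Suc p)
    have "Tb r n (2 * Suc p) m = Tb r n (2 + 2 * p) m" by (simp add: algebra_simps)
    also have "\<dots> \<le> ennreal (X ^ p) * Tb r n 2 m"
      by (rule Tb_mono_shift[where C="ennreal (X ^ p)"]) (use Suc in auto)
    also have "\<dots> \<le> ennreal (X ^ p) * ennreal X"
      by (rule mult_left_mono) (use B2[OF l2 nonneg Suc.prems n4] in \<open>simp_all add: X_def\<close>)
    also have "\<dots> = ennreal (X ^ Suc p)" using X0 by (simp add: ennreal_mult[symmetric] mult.commute)
    finally show ?case .
  qed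
  have odd: "Tb r n (2 * p + 1) m \<le> ennreal (R * X ^ p)" if m: "even (m - int n)" for p m
  proof -
    have "Tb r n (2 * p + 1) m = Tb r n (1 + 2 * p) m" by (simp add: algebra_simps)
    also have "\<dots> \<le> ennreal (X ^ p) * Tb r n 1 m"
      by (rule Tb_mono_shift[where C="ennreal (X ^ p)"]) (use ev m in auto)
    also have "\<dots> \<le> ennreal (X ^ p) * ennreal R"
      by (rule mult_left_mono) (use B1[OF l2 nonneg m] in \<open>simp_all add: R_def\<close>)
    also have "\<dots> = ennreal (R * X ^ p)" using X0 R0 by (simp add: ennreal_mult[symmetric] mult.commute)
    finally show ?thesis .
  qed
  show ?thesis
  proof (intro conjI allI impI)
    fix m :: int assume h: "even (m - int n) \<and> real_of_int \<bar>m - int n\<bar> \<le> real n / 2"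
    show "sigma1 r n 1 m \<le> ennreal (rho_tilde r n)"
      using sT[of m 1] B1'[OF l2 nonneg _ n4, of m] h by (meson order_trans)
  next
    fix m :: int assume h: "even (m - int n)"
    show "sigma1 r n 1 m \<le> ennreal (l2norm r)"
      using sT[OF h, of 1] B1[OF l2 nonneg h] by (rule order_trans)
  next
    fix p :: nat and m :: int assume h: "1 \<le> p \<and> even (m - int n)"
    show "sigma1 r n (2 * p) m \<le> ennreal ((2 * l2norm r * rho_tilde r n) ^ p)"
      using sT[of m "2 * p"] ev[of m p] h unfolding X_def by (meson order_trans)
  next
    fix p :: nat and m :: int assume h: "even (m - int n)"
    show "sigma1 r n (2 * p + 1) m \<le> ennreal (l2norm r * (2 * l2norm r * rho_tilde r n) ^ p)"
      using sT[OF h, of "2 * p + 1"] odd[OF h, of p] unfolding X_def R_def by (rule order_trans)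
  qed
qed


end
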